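(* Let $\mathcal{S}$ be the STAIR code with inside global parity symbols as defined in the context. Then: (a) the map sending $X\in\mathcal{S}$ to its entries at the data positions is a bijection from $\mathcal{S}$ onto $\mathbb{F}^{r(n-m)-s}$; that is, for every assignment of data symbols to the data positions there is exactly one array in $\mathcal{S}$ with those data symbols (so the inside global parity symbols and row parity symbols are uniquely determined, and in particular upstairs and downstairs encoding yield the same values); (b) $\mathcal{S}$ tolerates the following failures: let $F\subseteq\{0,\dots,n-1\}$ with $|F|\le m$, and for each $j\notin F$ let $L_j\subseteq\{0,\dots,r-1\}$, such that the number $t$ of $j\notin F$ with $L_j\ne\emptyset$ satisfies $t\le m'$ and the sorted nonzero sizes $f_0\le\cdots\le f_{t-1}$ of these $L_j$ satisfy $f_{t-1-i}\le e_{m'-1-i}$ for $0\le i\le t-1$. Then every $X\in\mathcal{S}$ is uniquely determined within $\mathcal{S}$ by its entries $X_{i,j}$ with $j\notin F$ and $i\notin L_j$.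
   Context: Parameters: integers $n,r,m,m'$ with $1\le m<n$, $1\le m'\le n-m$, and $\mathbf{e}=(e_0,\dots,e_{m'-1})$ with $0<e_0\le\cdots\le e_{m'-1}\le r$; $s=\sum_l e_l$. Field $\mathbb{F}=GF(2^w)$ with $n+m'\le 2^w$, $r+e_{m'-1}\le 2^w$. An $(\eta,\kappa)$-code is a linear MDS code of length $\eta$ and dimension $\kappa$ (any $\kappa$ coordinates determine the codeword); systematic means a codeword is the $\kappa$ input symbols followed by $\eta-\kappa$ parity symbols. $\mathcal{C}_{row}$ is a systematic $(n+m',n-m)$-code and $\mathcal{C}_{col}$ a systematic $(r+e_{m'-1},r)$-code over $\mathbb{F}$. Stair positions: $T=\{(i,\,n-m-m'+l): 0\le l\le m'-1,\ r-e_l\le i\le r-1\}$ (inside global parity symbol $\hat g_{h,l}$ sits at row $r-e_l+h$ of column $n-m-m'+l$). Data positions: all $(i,j)$ with $0\le i\le r-1$, $0\le j\le n-m-1$, $(i,j)\notin T$; there are $r(n-m)-s$ of them. Columns $n-m,\dots,n-1$ hold row parity symbols. $\mathcal{S}$ is the set of $r\times n$ arrays $X$ over $\mathbb{F}$ for which there exists an $r\times m'$ array $P'$ such that (i) for each row $i$, the vector $(X_{i,0},\dots,X_{i,n-1},P'_{i,0},\dots,P'_{i,m'-1})$ is a codeword of $\mathcal{C}_{row}$ (i.e., it is the $\mathcal{C}_{row}$-encoding of $(X_{i,0},\dots,X_{i,n-m-1})$); and (ii) for each $l$, encoding column $(P'_{0,l},\dots,P'_{r-1,l})$ with $\mathcal{C}_{col}$,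 the first $e_l$ of its $e_{m'-1}$ parity symbols are zero (the outside global parity symbols are fixed to zero). *)

theory Defs
  imports "Jordan_Normal_Form.Matrix" "HOL-Library.FuncSet"
begin

definition linear_code :: "nat \<Rightarrow> 'a::field list set \<Rightarrow> bool" where
  "linear_code eta C \<longleftrightarrow>
     (\<forall>c\<in>C. length c = eta) \<and> replicate eta 0 \<in> C \<and>
     (\<forall>c\<in>C. \<forall>d\<in>C. map2 (+) c d \<in> C) \<and>
     (\<forall>a. \<forall>c\<in>C. map (\<lambda>x. a * x) c \<in> C)"

definition mds_code :: "nat \<Rightarrow> nat \<Rightarrow> 'a::field list set \<Rightarrow> bool" where
  "mds_code eta kappa C \<longleftrightarrow> linear_code eta C \<and>
     (\<forall>I. I \<subseteq> {0..<eta} \<and> card I = kappa \<longrightarrow>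
        bij_betw (\<lambda>c. map (\<lambda>i. c ! i) (sorted_list_of_set I)) C {v. length v = kappa})"

definition stair_pos :: "nat \<Rightarrow> nat \<Rightarrow> nat \<Rightarrow> nat \<Rightarrow> (nat \<Rightarrow> nat) \<Rightarrow> (nat \<times> nat) set" where
  "stair_pos n r m m' e = {(i, n - m - m' + l) | i l. l < m' \<and> r - e l \<le> i \<and> i < r}"

definition data_pos :: "nat \<Rightarrow> nat \<Rightarrow> nat \<Rightarrow> nat \<Rightarrow> (nat \<Rightarrow> nat) \<Rightarrow> (nat \<times> nat) set" where
  "data_pos n r m m' e = {(i, j). i < r \<and> j < n - m \<and> (i, j) \<notin> stair_pos n r m m' e}"

definition stair_code ::
  "'a::field list set \<Rightarrow> 'a list set \<Rightarrow> nat \<Rightarrow> nat \<Rightarrow> nat \<Rightarrow> (nat \<Rightarrow> nat) \<Rightarrow> 'a mat set" where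
  "stair_code Crow Ccol n r m' e =
     {X \<in> carrier_mat r n. \<exists>P' \<in> carrier_mat r m'.
        (\<forall>i<r. list_of_vec (row X i) @ list_of_vec (row P' i) \<in> Crow) \<and>
        (\<forall>l<m'. \<forall>c\<in>Ccol. take r c = list_of_vec (col P' l) \<longrightarrow> (\<forall>k<e l. c ! (r + k) = 0))}"

end

theory Submission
  imports Defs
begin


definition cw :: "'a list set \<Rightarrow> nat \<Rightarrow> (nat \<Rightarrow> 'a) \<Rightarrow> bool" where
  "cw C eta f \<longleftrightarrow> map f [0..<eta] \<in> C"

lemma cw_cong: "cw C eta f \<Longrightarrow> (\<And>q. q < eta \<Longrightarrow> f q = g q) \<Longrightarrow> cw C eta g"
proof -
  assume a: "cw C eta f" and b: "\<And>q. q < eta \<Longrightarrow> f q = g q"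
  have "map f [0..<eta] = map g [0..<eta]" using b by (intro map_cong) auto
  thus ?thesis using a unfolding cw_def by metis
qed

lemma map2_map_map: "map2 h (map f xs) (map g xs) = map (\<lambda>x. h (f x) (g x)) xs"
  by (induction xs) auto

lemma cw_add: "linear_code eta C \<Longrightarrow> cw C eta f \<Longrightarrow> cw C eta g \<Longrightarrow> cw C eta (\<lambda>q. f q + g q)"
  unfolding cw_def linear_code_def using map2_map_map[of "(+)" f "[0..<eta]" g] by metis

lemma cw_scale: "linear_code eta C \<Longrightarrow> cw C eta f \<Longrightarrow> cw C eta (\<lambda>q. a * f q)"
proof -
  assume "linear_code eta C" "cw C eta f"
  hence "map ((*) a) (map f [0..<eta]) \<in> C" unfolding cw_def linear_code_def by blast
  thus ?thesis unfolding cw_def by (simp add: comp_def)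
qed

lemma cw_zero: "linear_code eta C \<Longrightarrow> cw C eta (\<lambda>q. 0)"
  unfolding cw_def linear_code_def by (simp add: map_replicate_const)

lemma cw_diff: "linear_code eta C \<Longrightarrow> cw C eta f \<Longrightarrow> cw C eta g \<Longrightarrow> cw C eta (\<lambda>q. f q - g q)"
proof -
  assume a: "linear_code eta C" "cw C eta f" "cw C eta g"
  have "cw C eta (\<lambda>q. f q + (-1) * g q)" using a cw_add cw_scale by blast
  thus ?thesis by simp
qed

lemma cw_sum: assumes lin: "linear_code eta C" shows "finite A \<Longrightarrow> (\<And>i. i \<in> A \<Longrightarrow> cw C eta (f i)) \<Longrightarrow>
   cw C eta (\<lambda>q. \<Sum>i\<in>A. a i * f i q)"
proof (induction A rule: finite_induct)
  case empty thus ?case using cw_zero[OF lin] by simp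
next
  case (insert x F)
  have "cw C eta (\<lambda>q. a x * f x q + (\<Sum>i\<in>F. a i * f i q))"
    using insert cw_add[OF lin] cw_scale[OF lin] by blast
  thus ?case using insert by simp
qed

lemma mds_lin: "mds_code eta kappa C \<Longrightarrow> linear_code eta C"
  unfolding mds_code_def by simp

lemma cw_zero_on:
  assumes mds: "mds_code eta kappa C" and f: "cw C eta f" and I: "I \<subseteq> {0..<eta}" "kappa \<le> card I"
    and z: "\<And>i. i \<in> I \<Longrightarrow> f i = 0"
  shows "\<And>q. q < eta \<Longrightarrow> f q = 0"
proof -
  have fin: "finite I" using I finite_subset by blast
  obtain I' where I': "I' \<subseteq> I" "card I' = kappa" using I fin obtain_subset_with_card_n by metis
  have bij: "bij_betw (\<lambda>c. map (\<lambda>i. c ! i) (sorted_list_of_set I')) C {v. length v = kappa}"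
    using mds I' I unfolding mds_code_def by blast
  have inj: "inj_on (\<lambda>c. map (\<lambda>i. c ! i) (sorted_list_of_set I')) C" using bij bij_betw_def by blast
  have c1: "map f [0..<eta] \<in> C" using f cw_def by metis
  have c2: "replicate eta 0 \<in> C" using mds unfolding mds_code_def linear_code_def by blast
  have fin': "finite I'" using I' fin finite_subset by blast
  have "map (\<lambda>i. (map f [0..<eta]) ! i) (sorted_list_of_set I') = map (\<lambda>i. (replicate eta 0) ! i) (sorted_list_of_set I')"
  proof (rule map_cong[OF refl])
    fix i assume "i \<in> set (sorted_list_of_set I')"
    hence "i \<in> I'" using fin' by simp
    hence "i \<in> I" "i < eta" using I' I by auto
    thus "(map f [0..<eta]) ! i = (replicate eta 0) ! i" using z by simp
  qed
  hence eq: "map f [0..<eta] = replicate eta 0" using inj c1 c2 unfolding inj_on_def by blast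
  fix q assume "q < eta"
  thus "f q = 0" using arg_cong[OF eq, of "\<lambda>xs. xs ! q"] by simp
qed

definition enc :: "'a list set \<Rightarrow> nat \<Rightarrow> nat \<Rightarrow> (nat \<Rightarrow> 'a) \<Rightarrow> nat \<Rightarrow> 'a::field" where
  "enc C eta kappa u = (SOME g. cw C eta g \<and> (\<forall>j<kappa. g j = u j))"

lemma mds_exists:
  assumes mds: "mds_code eta kappa C" and le: "kappa \<le> eta"
  shows "\<exists>g. cw C eta g \<and> (\<forall>j<kappa. g j = (u j :: 'a::field))"
proof -
  have bij: "bij_betw (\<lambda>c. map (\<lambda>i. c ! i) (sorted_list_of_set {0..<kappa})) C {v. length v = kappa}"
    using mds le unfolding mds_code_def by (metis atLeastLessThan_iff card_atLeastLessThan diff_zero less_le_trans subsetI)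
  have sl: "sorted_list_of_set {0..<kappa} = [0..<kappa]" by simp
  have "map u [0..<kappa] \<in> {v. length v = kappa}" by simp
  hence "map u [0..<kappa] \<in> (\<lambda>c. map (\<lambda>i. c ! i) [0..<kappa]) ` C"
    using bij unfolding bij_betw_def sl by simp
  then obtain c where c: "c \<in> C" "map (\<lambda>i. c ! i) [0..<kappa] = map u [0..<kappa]"
    by (auto simp del: map_eq_conv)
  have len: "length c = eta" using c mds unfolding mds_code_def linear_code_def by blast
  have "map (\<lambda>q. c ! q) [0..<eta] = c" using len map_nth[of c] by simp
  hence "cw C eta (\<lambda>q. c ! q)" using c cw_def by metis
  moreover have "\<forall>j<kappa. c ! j = u j" using c(2) by simp
  ultimately show ?thesis by blast
qed

lemma enc_props:
  assumes "mds_code eta kappa C" "kappa \<le> eta"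
  shows "cw C eta (enc C eta kappa u)" "\<And>j. j < kappa \<Longrightarrow> enc C eta kappa u j = u j"
  using someI_ex[OF mds_exists[OF assms, of u]] unfolding enc_def by auto

lemma enc_unique:
  assumes mds: "mds_code eta kappa C" and le: "kappa \<le> eta" and g: "cw C eta g"
    and gu: "\<And>j. j < kappa \<Longrightarrow> g j = u j" and q: "q < eta"
  shows "g q = enc C eta kappa u q"
proof -
  have "cw C eta (\<lambda>q. g q - enc C eta kappa u q)"
    using cw_diff[OF mds_lin[OF mds] g enc_props(1)[OF mds le]] .
  moreover have "\<And>i. i \<in> {0..<kappa} \<Longrightarrow> g i - enc C eta kappa u i = 0"
    using gu enc_props(2)[OF mds le] by simp
  ultimately have "g q - enc C eta kappa u q = 0"
    using cw_zero_on[OF mds _ _ _ _ q, of "\<lambda>q. g q - enc C eta kappa u q" "{0..<kappa}"] le by simp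
  thus ?thesis by simp
qed

lemma enc_cong: "(\<And>j. j < kappa \<Longrightarrow> u j = v j) \<Longrightarrow> enc C eta kappa u = enc C eta kappa v"
proof -
  assume h: "\<And>j. j < kappa \<Longrightarrow> u j = v j"
  have "(\<lambda>g. cw C eta g \<and> (\<forall>j<kappa. g j = u j)) = (\<lambda>g. cw C eta g \<and> (\<forall>j<kappa. g j = v j))"
    using h by auto
  thus ?thesis unfolding enc_def by simp
qed

lemma enc_diff:
  assumes mds: "mds_code eta kappa C" and le: "kappa \<le> eta" and q: "q < eta"
  shows "enc C eta kappa (\<lambda>j. u j - v j) q = enc C eta kappa u q - enc C eta kappa v q"
proof -
  have "cw C eta (\<lambda>q. enc C eta kappa u q - enc C eta kappa v q)"
    using cw_diff[OF mds_lin[OF mds] enc_props(1)[OF mds le] enc_props(1)[OF mds le]] .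
  moreover have "\<And>j. j < kappa \<Longrightarrow> enc C eta kappa u j - enc C eta kappa v j = u j - v j"
    using enc_props(2)[OF mds le] by simp
  ultimately have "(\<lambda>q. enc C eta kappa u q - enc C eta kappa v q) q = enc C eta kappa (\<lambda>j. u j - v j) q"
    by (rule enc_unique[OF mds le _ _ q])
  thus ?thesis by simp
qed

lemma enc_sum:
  assumes mds: "mds_code eta kappa C" and le: "kappa \<le> eta" and q: "q < eta" and fin: "finite A"
  shows "enc C eta kappa (\<lambda>j. \<Sum>i\<in>A. a i * u i j) q = (\<Sum>i\<in>A. a i * enc C eta kappa (u i) q)"
proof -
  have "cw C eta (\<lambda>q. \<Sum>i\<in>A. a i * enc C eta kappa (u i) q)"
    by (rule cw_sum[OF mds_lin[OF mds] fin]) (rule enc_props(1)[OF mds le])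
  moreover have "\<And>j. j < kappa \<Longrightarrow> (\<Sum>i\<in>A. a i * enc C eta kappa (u i) j) = (\<Sum>i\<in>A. a i * u i j)"
    by (intro sum.cong refl) (simp add: enc_props(2)[OF mds le])
  ultimately have "(\<lambda>q. \<Sum>i\<in>A. a i * enc C eta kappa (u i) q) q = enc C eta kappa (\<lambda>j. \<Sum>i\<in>A. a i * u i j) q"
    by (rule enc_unique[OF mds le _ _ q])
  thus ?thesis by simp
qed



lemma core:
  fixes A :: "nat \<Rightarrow> nat \<Rightarrow> 'a::field"
  assumes mdsR: "mds_code N K Crow" and mdsC: "mds_code (r+E) r Ccol"
    and rows: "\<And>q. q < r+E \<Longrightarrow> cw Crow N (A q)"
    and cols: "\<And>j. j < N \<Longrightarrow> cw Ccol (r+E) (\<lambda>q. A q j)"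
    and glob: "\<And>l k. l < m' \<Longrightarrow> k < e l \<Longrightarrow> A (r+k) (n+l) = 0"
    and known: "\<And>i j. j < n \<Longrightarrow> j \<notin> F \<Longrightarrow> i < r \<Longrightarrow> i \<notin> L j \<Longrightarrow> A i j = 0"
    and N: "N = n + m'" and Fsub: "F \<subseteq> {0..<n}" and Fc: "card F \<le> m" and K: "K = n - m"
    and Lsub: "\<And>j. j < n \<Longrightarrow> j \<notin> F \<Longrightarrow> L j \<subseteq> {0..<r}"
    and H: "\<And>k. card {j. j<n \<and> j\<notin>F \<and> L j \<noteq> {} \<and> k < card (L j)} \<le> card {l. l<m' \<and> k < e l}"
    and eE: "\<And>l. l<m' \<Longrightarrow> e l \<le> E"
  shows "\<And>i j. i < r \<Longrightarrow> j < n \<Longrightarrow> A i j = 0"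
proof -
  define G where "G = {j. j<n \<and> j\<notin>F \<and> L j = {}}"
  define J where "J = {j. j<n \<and> j\<notin>F \<and> L j \<noteq> {}}"
  have finG: "finite G" unfolding G_def by simp
  have finJ: "finite J" unfolding J_def by simp
  have GJ: "G \<union> J = {0..<n} - F" unfolding G_def J_def by auto
  have GJd: "G \<inter> J = {}" unfolding G_def J_def by auto
  have finF: "finite F" using Fsub finite_subset by blast
  have cGJ: "card G + card J = n - card F"
  proof -
    have "card G + card J = card (G \<union> J)" using card_Un_disjoint[OF finG finJ GJd] by simp
    also have "\<dots> = card ({0..<n} - F)" using GJ by simp
    also have "\<dots> = n - card F" using card_Diff_subset[OF finF Fsub] by simp
    finally show ?thesis .
  qed
  have cFn: "card F \<le> n" using card_mono[OF _ Fsub] by simp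
  have full: "A q j = 0" if j: "j \<in> G" and q: "q < r+E" for j q
  proof -
    have jN: "j < N" using j N unfolding G_def by simp
    show ?thesis
    proof (rule cw_zero_on[OF mdsC cols[OF jN], of "{0..<r}" q])
      show "{0..<r} \<subseteq> {0..<r+E}" by auto
      show "r \<le> card {0..<r}" by simp
      show "q < r + E" by fact
      fix i assume "i \<in> {0..<r}"
      thus "A i j = 0" using known[of j i] j unfolding G_def by auto
    qed
  qed
  have colz: "A q j = 0" if j: "j \<in> J" and cE: "card (L j) \<le> E"
      and hz: "\<And>k'. k' < card (L j) \<Longrightarrow> A (r+k') j = 0" and q: "q < r+E" for j q
  proof -
    have jN: "j < N" using j N unfolding J_def by simp
    have Ls: "L j \<subseteq> {0..<r}" using Lsub j unfolding J_def by simp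
    have cLr: "card (L j) \<le> r" using card_mono[OF _ Ls] by simp
    have finL: "finite (L j)" using Ls finite_subset by blast
    define I where "I = ({0..<r} - L j) \<union> {r..<r + card (L j)}"
    have cI: "card I = r"
    proof -
      have "card I = card ({0..<r} - L j) + card {r..<r + card (L j)}"
        unfolding I_def by (rule card_Un_disjoint) auto
      also have "\<dots> = (r - card (L j)) + card (L j)" using card_Diff_subset[OF finL Ls] by simp
      finally show ?thesis using cLr by simp
    qed
    show ?thesis
    proof (rule cw_zero_on[OF mdsC cols[OF jN], of I q])
      show "I \<subseteq> {0..<r+E}" unfolding I_def using cE by auto
      show "r \<le> card I" using cI by simp
      show "q < r + E" by fact
      fix i assume i: "i \<in> I"
      show "A i j = 0"
      proof (cases "i < r")
        case True thus ?thesis using i known[of j i] j unfolding I_def J_def by auto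
      next
        case False
        hence "i - r < card (L j)" "i = r + (i - r)" using i unfolding I_def by auto
        thus ?thesis using hz by metis
      qed
    qed
  qed
  have rowstep: "A (r+k) j = 0" if k: "k < E" and IH: "\<And>k' j. k' < k \<Longrightarrow> j < N \<Longrightarrow> A (r+k') j = 0"
     and j: "j < N" for k j
  proof -
    define Gl where "Gl = (\<lambda>l. n+l) ` {l. l<m' \<and> k < e l}"
    define Jk where "Jk = {j\<in>J. card (L j) \<le> k}"
    define Jb where "Jb = {j\<in>J. k < card (L j)}"
    have finGl: "finite Gl" unfolding Gl_def by simp
    have finJk: "finite Jk" unfolding Jk_def using finJ by simp
    have finJb: "finite Jb" unfolding Jb_def using finJ by simp
    have cGl: "card Gl = card {l. l<m' \<and> k < e l}" unfolding Gl_def by (rule card_image) (simp add: inj_on_def)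
    have "Jb = {j. j<n \<and> j\<notin>F \<and> L j \<noteq> {} \<and> k < card (L j)}" unfolding Jb_def J_def by auto
    hence cJb: "card Jb \<le> card Gl" using H[of k] cGl by simp
    have cJ: "card J = card Jk + card Jb"
    proof -
      have "J = Jk \<union> Jb" "Jk \<inter> Jb = {}" unfolding Jk_def Jb_def by auto
      thus ?thesis using card_Un_disjoint[OF finJk finJb] by simp
    qed
    define I where "I = G \<union> Gl \<union> Jk"
    have cI: "card I = card G + card Gl + card Jk"
    proof -
      have d1: "G \<inter> Gl = {}" unfolding G_def Gl_def by auto
      have d2: "(G \<union> Gl) \<inter> Jk = {}" unfolding G_def Gl_def Jk_def J_def by auto
      have "card I = card (G \<union> Gl) + card Jk" unfolding I_def
        using card_Un_disjoint[OF _ finJk d2] finG finGl by simp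
      also have "card (G \<union> Gl) = card G + card Gl" using card_Un_disjoint[OF finG finGl d1] .
      finally show ?thesis .
    qed
    have KI: "K \<le> card I" using cI cJ cJb cGJ K Fc cFn by linarith
    show ?thesis
    proof (rule cw_zero_on[OF mdsR rows, of "r+k" I j])
      show "r + k < r + E" using k by simp
      show "I \<subseteq> {0..<N}" unfolding I_def G_def Gl_def Jk_def J_def N by auto
      show "K \<le> card I" by fact
      show "j < N" by fact
      fix i assume i: "i \<in> I"
      show "A (r+k) i = 0"
      proof -
        { assume "i \<in> G" hence ?thesis using full k by simp }
        moreover
        { assume "i \<in> Gl" then obtain l where "l < m'" "k < e l" "i = n + l" unfolding Gl_def by auto
          hence ?thesis using glob by simp }
        moreover
        { assume ij: "i \<in> Jk"
          hence iJ: "i \<in> J" and ck: "card (L i) \<le> k" unfolding Jk_def by auto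
          have iN: "i < N" using iJ N unfolding J_def by simp
          have ?thesis
          proof (rule colz[OF iJ])
            show "card (L i) \<le> E" using ck k by simp
            show "r + k < r + E" using k by simp
            fix k' assume "k' < card (L i)"
            thus "A (r + k') i = 0" using IH[OF _ iN] ck by simp
          qed }
        ultimately show ?thesis using i unfolding I_def by blast
      qed
    qed
  qed
  have allrows: "\<forall>k'<k. \<forall>j<N. A (r+k') j = 0" if "k \<le> E" for k
    using that
  proof (induction k)
    case 0 thus ?case by simp
  next
    case (Suc k)
    hence IH: "\<forall>k'<k. \<forall>j<N. A (r+k') j = 0" by simp
    have "\<forall>j<N. A (r+k) j = 0" using rowstep[of k] Suc.prems IH by simp
    thus ?case using IH less_Suc_eq by auto
  qed
  have Jfull: "A q j = 0" if j: "j \<in> J" and q: "q < r+E" for j q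
  proof -
    have e0: "{l. l<m' \<and> E < e l} = {}" using eE by force
    have "card {j. j<n \<and> j\<notin>F \<and> L j \<noteq> {} \<and> E < card (L j)} = 0" using H[of E] e0 by simp
    hence "{j. j<n \<and> j\<notin>F \<and> L j \<noteq> {} \<and> E < card (L j)} = {}" by simp
    hence cE: "card (L j) \<le> E" using j unfolding J_def by auto
    have jN: "j < N" using j N unfolding J_def by simp
    show ?thesis
    proof (rule colz[OF j cE _ q])
      fix k' assume "k' < card (L j)"
      thus "A (r + k') j = 0" using allrows[of E] cE jN by simp
    qed
  qed
  fix i j assume i: "i < r" and j: "j < n"
  show "A i j = 0"
  proof (rule cw_zero_on[OF mdsR rows, of i "{0..<n} - F" j])
    show "i < r + E" using i by simp
    show "{0..<n} - F \<subseteq> {0..<N}" using N by auto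
    show "K \<le> card ({0..<n} - F)" using card_Diff_subset[OF finF Fsub] K Fc by simp
    show "j < N" using j N by simp
    fix j' assume "j' \<in> {0..<n} - F"
    hence "j' \<in> G \<or> j' \<in> J" using GJ by blast
    thus "A i j' = 0" using full Jfull i by auto
  qed
qed



lemma row_list:
  assumes X: "X \<in> carrier_mat r n" and P: "P \<in> carrier_mat r m'" and i: "i < r"
  shows "list_of_vec (row X i) @ list_of_vec (row P i) =
         map (\<lambda>j. if j < n then X $$ (i,j) else P $$ (i, j - n)) [0..<n+m']"
proof (rule nth_equalityI)
  show "length (list_of_vec (row X i) @ list_of_vec (row P i)) =
        length (map (\<lambda>j. if j < n then X $$ (i,j) else P $$ (i, j - n)) [0..<n+m'])"
    using X P by simp
  fix q assume q: "q < length (list_of_vec (row X i) @ list_of_vec (row P i))"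
  hence q': "q < n + m'" using X P by simp
  show "(list_of_vec (row X i) @ list_of_vec (row P i)) ! q =
        map (\<lambda>j. if j < n then X $$ (i,j) else P $$ (i, j - n)) [0..<n+m'] ! q"
    using X P i q' by (auto simp: nth_append list_of_vec_index)
qed

lemma col_list:
  assumes P: "P \<in> carrier_mat r m'" and l: "l < m'"
  shows "list_of_vec (col P l) = map (\<lambda>i. P $$ (i, l)) [0..<r]"
  by (rule nth_equalityI) (use P l in \<open>auto simp: list_of_vec_index\<close>)

lemma stair_unpack:
  assumes X: "X \<in> stair_code Crow Ccol n r m' e" and eE: "\<And>l. l < m' \<Longrightarrow> e l \<le> E"
  shows "\<exists>P \<in> carrier_mat r m'. X \<in> carrier_mat r n \<and>
     (\<forall>i<r. cw Crow (n+m') (\<lambda>j. if j < n then X $$ (i,j) else P $$ (i, j - n))) \<and>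
     (\<forall>l<m'. \<forall>g. cw Ccol (r+E) g \<and> (\<forall>i<r. g i = P $$ (i,l)) \<longrightarrow> (\<forall>k<e l. g (r+k) = 0))"
proof -
  from X obtain P where XC: "X \<in> carrier_mat r n" and P: "P \<in> carrier_mat r m'"
    and rw: "\<forall>i<r. list_of_vec (row X i) @ list_of_vec (row P i) \<in> Crow"
    and cl: "\<forall>l<m'. \<forall>c\<in>Ccol. take r c = list_of_vec (col P l) \<longrightarrow> (\<forall>k<e l. c ! (r + k) = 0)"
    unfolding stair_code_def by blast
  have "\<forall>i<r. cw Crow (n+m') (\<lambda>j. if j < n then X $$ (i,j) else P $$ (i, j - n))"
    using rw row_list[OF XC P] unfolding cw_def by simp
  moreover have "\<forall>l<m'. \<forall>g. cw Ccol (r+E) g \<and> (\<forall>i<r. g i = P $$ (i,l)) \<longrightarrow> (\<forall>k<e l. g (r+k) = 0)"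
  proof (intro allI impI)
    fix l g k assume l: "l < m'" and g: "cw Ccol (r+E) g \<and> (\<forall>i<r. g i = P $$ (i,l))" and k: "k < e l"
    have c: "map g [0..<r+E] \<in> Ccol" using g cw_def by blast
    have "take r (map g [0..<r+E]) = map g [0..<r]" by (simp add: take_map)
    also have "\<dots> = list_of_vec (col P l)" using col_list[OF P l] g by simp
    finally have "(map g [0..<r+E]) ! (r + k) = 0" using cl l c k by blast
    moreover have "r + k < r + E" using k eE[OF l] by simp
    ultimately show "g (r+k) = 0" by simp
  qed
  ultimately show ?thesis using XC P by blast
qed

lemma decode:
  fixes Crow Ccol :: "'a::field list set"
  assumes mdsR: "mds_code (n + m') (n - m) Crow" and mdsC: "mds_code (r + E) r Ccol"
    and eE: "\<And>l. l < m' \<Longrightarrow> e l \<le> E"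
    and X: "X \<in> stair_code Crow Ccol n r m' e" and Y: "Y \<in> stair_code Crow Ccol n r m' e"
    and Fsub: "F \<subseteq> {0..<n}" and Fc: "card F \<le> m" and mn: "m < n"
    and Lsub: "\<And>j. j < n \<Longrightarrow> j \<notin> F \<Longrightarrow> L j \<subseteq> {0..<r}"
    and H: "\<And>k. card {j. j<n \<and> j\<notin>F \<and> L j \<noteq> {} \<and> k < card (L j)} \<le> card {l. l<m' \<and> k < e l}"
    and agree: "\<forall>j<n. j \<notin> F \<longrightarrow> (\<forall>i<r. i \<notin> L j \<longrightarrow> X $$ (i, j) = Y $$ (i, j))"
  shows "X = Y"
proof -
  obtain PX where PX: "PX \<in> carrier_mat r m'" and XC: "X \<in> carrier_mat r n"
    and rX: "\<forall>i<r. cw Crow (n+m') (\<lambda>j. if j < n then X $$ (i,j) else PX $$ (i, j - n))"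
    and cX: "\<forall>l<m'. \<forall>g. cw Ccol (r+E) g \<and> (\<forall>i<r. g i = PX $$ (i,l)) \<longrightarrow> (\<forall>k<e l. g (r+k) = 0)"
    using stair_unpack[OF X eE] by blast
  obtain PY where PY: "PY \<in> carrier_mat r m'" and YC: "Y \<in> carrier_mat r n"
    and rY: "\<forall>i<r. cw Crow (n+m') (\<lambda>j. if j < n then Y $$ (i,j) else PY $$ (i, j - n))"
    and cY: "\<forall>l<m'. \<forall>g. cw Ccol (r+E) g \<and> (\<forall>i<r. g i = PY $$ (i,l)) \<longrightarrow> (\<forall>k<e l. g (r+k) = 0)"
    using stair_unpack[OF Y eE] by blast
  have le1: "n - m \<le> n + m'" by simp
  have le2: "r \<le> r + E" by simp
  have linR: "linear_code (n+m') Crow" using mds_lin[OF mdsR] .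
  define W where "W i j = (if j < n then X $$ (i,j) else PX $$ (i, j - n)) -
                         (if j < n then Y $$ (i,j) else PY $$ (i, j - n))" for i j
  have cwW: "cw Crow (n+m') (W i)" if "i < r" for i
    unfolding W_def using cw_diff[OF linR] rX rY that by blast
  define A where "A q j = enc Ccol (r+E) r (\<lambda>i. W i j) q" for q j
  define d where "d i = (\<lambda>i'::nat. if i' = i then (1::'a) else 0)" for i
  have Aform: "A q j = (\<Sum>i\<in>{..<r}. enc Ccol (r+E) r (d i) q * W i j)" if q: "q < r + E" for q j
  proof -
    have "enc Ccol (r+E) r (\<lambda>i. W i j) = enc Ccol (r+E) r (\<lambda>i'. \<Sum>i\<in>{..<r}. W i j * d i i')"
    proof (rule enc_cong)
      fix i' assume "i' < r"
      thus "W i' j = (\<Sum>i\<in>{..<r}. W i j * d i i')" unfolding d_def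
        by (simp add: if_distrib cong: if_cong)
    qed
    hence "A q j = (\<Sum>i\<in>{..<r}. W i j * enc Ccol (r+E) r (d i) q)"
      unfolding A_def using enc_sum[OF mdsC le2 q, of "{..<r}" "\<lambda>i. W i j" d] by simp
    thus ?thesis by (simp add: mult.commute)
  qed
  have rows: "cw Crow (n+m') (A q)" if q: "q < r + E" for q
  proof -
    have "cw Crow (n+m') (\<lambda>j. \<Sum>i\<in>{..<r}. enc Ccol (r+E) r (d i) q * W i j)"
      by (rule cw_sum[OF linR]) (auto intro: cwW)
    moreover have "A q = (\<lambda>j. \<Sum>i\<in>{..<r}. enc Ccol (r+E) r (d i) q * W i j)"
      using Aform[OF q] by (intro ext) simp
    ultimately show ?thesis by simp
  qed
  have cols: "cw Ccol (r+E) (\<lambda>q. A q j)" for j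
    unfolding A_def using enc_props(1)[OF mdsC le2] by simp
  have glob: "A (r+k) (n+l) = 0" if l: "l < m'" and k: "k < e l" for l k
  proof -
    have q: "r + k < r + E" using k eE[OF l] by simp
    have "A (r+k) (n+l) = enc Ccol (r+E) r (\<lambda>i. PX $$ (i,l) - PY $$ (i,l)) (r+k)"
      unfolding A_def W_def by simp
    also have "\<dots> = enc Ccol (r+E) r (\<lambda>i. PX $$ (i,l)) (r+k) - enc Ccol (r+E) r (\<lambda>i. PY $$ (i,l)) (r+k)"
      by (rule enc_diff[OF mdsC le2 q])
    also have "enc Ccol (r+E) r (\<lambda>i. PX $$ (i,l)) (r+k) = 0"
      using cX l k enc_props[OF mdsC le2, where u="\<lambda>i. PX $$ (i,l)"] by blast
    also have "enc Ccol (r+E) r (\<lambda>i. PY $$ (i,l)) (r+k) = 0"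
      using cY l k enc_props[OF mdsC le2, where u="\<lambda>i. PY $$ (i,l)"] by blast
    finally show ?thesis by simp
  qed
  have AW: "A i j = W i j" if "i < r" for i j
    unfolding A_def using enc_props(2)[OF mdsC le2] that by simp
  have known: "A i j = 0" if "j < n" "j \<notin> F" "i < r" "i \<notin> L j" for i j
    using AW agree that unfolding W_def by simp
  have z: "A i j = 0" if "i < r" "j < n" for i j
    by (rule core[OF mdsR mdsC rows cols glob known refl Fsub Fc refl Lsub H eE])
       (use that in auto)
  show "X = Y"
  proof (rule eq_matI)
    fix i j assume "i < dim_row Y" "j < dim_col Y"
    hence ij: "i < r" "j < n" using YC by auto
    show "X $$ (i,j) = Y $$ (i,j)" using z[OF ij] AW[OF ij(1)] ij unfolding W_def by simp
  qed (use XC YC in auto)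
qed

lemma fs_to_H:
  fixes J :: "nat set" and f :: "nat \<Rightarrow> nat"
  assumes finJ: "finite J" and tm: "card J \<le> m'"
    and cond: "\<forall>i<card J. sort (map f (sorted_list_of_set J)) ! (card J - 1 - i) \<le> e (m' - 1 - i)"
  shows "card {j\<in>J. k < f j} \<le> card {l. l < m' \<and> k < e l}"
proof -
  define t where "t = card J"
  define xs where "xs = sorted_list_of_set J"
  define fs where "fs = sort (map f xs)"
  have dxs: "distinct xs" "set xs = J" using finJ unfolding xs_def by auto
  have lfs: "length fs = t" unfolding fs_def t_def xs_def using finJ by simp
  have c1: "card {j\<in>J. k < f j} = length (filter (\<lambda>j. k < f j) xs)"
    using distinct_length_filter[OF dxs(1)] dxs(2) by (simp add: Collect_conj_eq Int_commute)
  also have "\<dots> = length (filter (\<lambda>x. k < x) (map f xs))" by (simp add: filter_map comp_def)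
  also have "\<dots> = length (filter (\<lambda>x. k < x) fs)"
  proof -
    have "mset (filter (\<lambda>x. k < x) fs) = mset (filter (\<lambda>x. k < x) (map f xs))"
      unfolding fs_def by simp
    thus ?thesis by (metis size_mset)
  qed
  also have "\<dots> = card {i. i < t \<and> k < fs ! i}" using length_filter_conv_card lfs by metis
  also have "\<dots> \<le> card {l. l < m' \<and> k < e l}"
  proof (rule card_inj_on_le[of "\<lambda>i. m' - t + i"])
    show "inj_on (\<lambda>i. m' - t + i) {i. i < t \<and> k < fs ! i}" by (simp add: inj_on_def)
    show "finite {l. l < m' \<and> k < e l}" by simp
    show "(\<lambda>i. m' - t + i) ` {i. i < t \<and> k < fs ! i} \<subseteq> {l. l < m' \<and> k < e l}"
    proof
      fix l assume "l \<in> (\<lambda>i. m' - t + i) ` {i. i < t \<and> k < fs ! i}"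
      then obtain i where i: "i < t" "k < fs ! i" "l = m' - t + i" by auto
      have h: "t - 1 - i < card J" using i(1) unfolding t_def by simp
      have eqs: "t - 1 - (t - 1 - i) = i" "m' - 1 - (t - 1 - i) = m' - t + i"
        using i(1) tm unfolding t_def by auto
      have "fs ! (t - 1 - (t - 1 - i)) \<le> e (m' - 1 - (t - 1 - i))"
        using cond h unfolding fs_def xs_def t_def by blast
      hence "fs ! i \<le> e l" unfolding eqs using i by simp
      thus "l \<in> {l. l < m' \<and> k < e l}" using i tm unfolding t_def by auto
    qed
  qed
  finally show ?thesis .
qed



lemma fiber_count:
  fixes psi :: "'x \<Rightarrow> 'y"
  assumes finV: "finite V" and img: "psi ` V \<subseteq> B" and finB: "finite B" and finK: "finite K"
    and fib: "\<And>x0. x0 \<in> V \<Longrightarrow> \<exists>h. inj_on h {x\<in>V. psi x = psi x0} \<and> h ` {x\<in>V. psi x = psi x0} \<subseteq> K"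
  shows "card V \<le> card B * card K"
proof -
  have "V = (\<Union>y\<in>psi ` V. {x\<in>V. psi x = y})" by auto
  hence "card V = card (\<Union>y\<in>psi ` V. {x\<in>V. psi x = y})" by simp
  also have "\<dots> \<le> (\<Sum>y\<in>psi ` V. card {x\<in>V. psi x = y})"
    by (rule card_UN_le) (use finV in simp)
  also have "\<dots> \<le> (\<Sum>y\<in>psi ` V. card K)"
  proof (rule sum_mono)
    fix y assume "y \<in> psi ` V"
    then obtain x0 where x0: "x0 \<in> V" "y = psi x0" by auto
    from fib[OF x0(1)] obtain h where h: "inj_on h {x\<in>V. psi x = psi x0}" "h ` {x\<in>V. psi x = psi x0} \<subseteq> K"
      by blast
    show "card {x\<in>V. psi x = y} \<le> card K" using card_inj_on_le[OF h finK] x0(2) by simp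
  qed
  also have "\<dots> = card (psi ` V) * card K" by simp
  also have "\<dots> \<le> card B * card K" using card_mono[OF finB img] by simp
  finally show ?thesis .
qed

lemma stair_iff:
  "p \<in> stair_pos n r m m' e \<longleftrightarrow> (\<exists>i l. p = (i, n - m - m' + l) \<and> l < m' \<and> r - e l \<le> i \<and> i < r)"
  unfolding stair_pos_def by blast

lemma surj_count:
  fixes Crow Ccol :: "'a::{field,finite} list set"
  assumes mdsR: "mds_code (n + m') (n - m) Crow" and mdsC: "mds_code (r + E) r Ccol"
    and eE: "\<And>l. l < m' \<Longrightarrow> e l \<le> E" and er: "\<And>l. l < m' \<Longrightarrow> e l \<le> r" and mm: "m' \<le> n - m"
    and finS: "finite (stair_code Crow Ccol n r m' e)"
  shows "card (UNIV::'a set) ^ (card ({0..<r} \<times> {0..<n-m}) - card (stair_pos n r m m' e))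
           \<le> card (stair_code Crow Ccol n r m' e)"
proof -
  define k0 where "k0 = n - m"
  define N where "N = n + m'"
  define box where "box = {0..<r} \<times> {0..<k0}"
  define st where "st = stair_pos n r m m' e"
  define S where "S = stair_code Crow Ccol n r m' e"
  define q where "q = card (UNIV::'a set)"
  define c0 where "c0 = n - m - m'"
  have stI: "p \<in> st \<longleftrightarrow> (\<exists>i l. p = (i, c0 + l) \<and> l < m' \<and> r - e l \<le> i \<and> i < r)" for p
    unfolding st_def c0_def by (rule stair_iff)
  have le1: "k0 \<le> N" unfolding k0_def N_def by simp
  have le2: "r \<le> r + E" by simp
  have mdsR': "mds_code N k0 Crow" using mdsR unfolding N_def k0_def .
  define re where "re U i = enc Crow N k0 (\<lambda>j. U (i,j))" for U :: "nat \<times> nat \<Rightarrow> 'a" and i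
  define cv where "cv U l = enc Ccol (r+E) r (\<lambda>i. re U i (n+l))" for U l
  define psi where "psi U = restrict (\<lambda>(i,j). cv U (j - c0) (r + (i - (r - e (j - c0))))) st" for U
  define V where "V = box \<rightarrow>\<^sub>E (UNIV :: 'a set)"
  define B where "B = st \<rightarrow>\<^sub>E (UNIV :: 'a set)"
  define K where "K = {U\<in>V. psi U = restrict (\<lambda>_. 0) st}"
  define mk where "mk U = mat r n (\<lambda>(i,j). re U i j)" for U
  define P where "P U = mat r m' (\<lambda>(i,l). re U i (n+l))" for U
  have finbox: "finite box" unfolding box_def by simp
  have stbox: "st \<subseteq> box"
  proof
    fix p assume "p \<in> st"
    then obtain i l where "p = (i, c0 + l)" "l < m'" "i < r" using stI by blast
    thus "p \<in> box" unfolding box_def c0_def k0_def using mm by auto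
  qed
  have finst: "finite st" using stbox finbox finite_subset by blast
  have finV: "finite V" unfolding V_def using finbox by (simp add: finite_PiE)
  have finB: "finite B" unfolding B_def using finst by (simp add: finite_PiE)
  have finK: "finite K" unfolding K_def using finV by simp
  have cV: "card V = q ^ card box" unfolding V_def q_def by (rule card_funcsetE[OF finbox])
  have cB: "card B = q ^ card st" unfolding B_def q_def by (rule card_funcsetE[OF finst])
  have psi_at: "psi U (i, c0 + l) = cv U l (r + (i - (r - e l)))" if "(i, c0 + l) \<in> st" for U i l
    unfolding psi_def using that by simp
  have mkS: "mk U \<in> S" if U: "U \<in> K" for U
  proof -
    have rowsU: "list_of_vec (row (mk U) i) @ list_of_vec (row (P U) i) \<in> Crow" if i: "i < r" for i
    proof -
      have "list_of_vec (row (mk U) i) @ list_of_vec (row (P U) i)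
          = map (\<lambda>j. if j < n then mk U $$ (i,j) else P U $$ (i, j - n)) [0..<n+m']"
        by (rule row_list) (auto simp: mk_def P_def i)
      also have "\<dots> = map (re U i) [0..<N]"
        by (rule map_cong) (auto simp: mk_def P_def i N_def)
      finally show ?thesis using enc_props(1)[OF mdsR' le1] unfolding re_def cw_def by simp
    qed
    have colsU: "\<forall>k<e l. c ! (r + k) = 0"
      if l: "l < m'" and c: "c \<in> Ccol" and tk: "take r c = list_of_vec (col (P U) l)" for l c
    proof (intro allI impI)
      fix k assume k: "k < e l"
      have lc: "length c = r + E" using c mds_lin[OF mdsC] unfolding linear_code_def by blast
      have mc: "map (\<lambda>q. c ! q) [0..<r+E] = c" using map_nth[of c] unfolding lc .
      have cwc: "cw Ccol (r+E) (\<lambda>q. c ! q)" unfolding cw_def mc using c .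
      have gi: "c ! i = re U i (n+l)" if i: "i < r" for i
      proof -
        have "c ! i = take r c ! i" using i by simp
        also have "\<dots> = list_of_vec (col (P U) l) ! i" using tk by simp
        also have "\<dots> = P U $$ (i, l)" using i l by (simp add: list_of_vec_index P_def)
        finally show ?thesis using i l by (simp add: P_def)
      qed
      have kk: "r + k < r + E" using k eE[OF l] by simp
      have "c ! (r + k) = cv U l (r + k)" unfolding cv_def
        by (rule enc_unique[OF mdsC le2 cwc _ kk]) (use gi in simp)
      moreover have mem: "(r - e l + k, c0 + l) \<in> st" unfolding stI
        by (rule exI[of _ "r - e l + k"], rule exI[of _ l]) (use l k er[OF l] in arith)
      moreover have "psi U = restrict (\<lambda>_. 0) st" using U unfolding K_def by simp
      hence "psi U (r - e l + k, c0 + l) = 0" using mem by simp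
      ultimately show "c ! (r + k) = 0" using psi_at[OF mem] er[OF l] by simp
    qed
    show ?thesis unfolding S_def stair_code_def
    proof (intro CollectI conjI bexI[of _ "P U"])
      show "mk U \<in> carrier_mat r n" by (simp add: mk_def)
      show "P U \<in> carrier_mat r m'" by (simp add: P_def)
      show "\<forall>i<r. list_of_vec (row (mk U) i) @ list_of_vec (row (P U) i) \<in> Crow" using rowsU by blast
      show "\<forall>l<m'. \<forall>c\<in>Ccol. take r c = list_of_vec (col (P U) l) \<longrightarrow> (\<forall>k<e l. c ! (r + k) = 0)"
        using colsU by blast
    qed
  qed
  have mkinj: "inj_on mk V"
  proof
    fix U U' assume U: "U \<in> V" and U': "U' \<in> V" and eq: "mk U = mk U'"
    show "U = U'"
    proof (rule extensionalityI)
      show "U \<in> extensional box" "U' \<in> extensional box" using U U' unfolding V_def by (auto simp: PiE_iff)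
      fix p assume p: "p \<in> box"
      then obtain i j where ij: "p = (i,j)" "i < r" "j < k0" unfolding box_def by auto
      have jn: "j < n" using ij k0_def by simp
      have "U (i,j) = re U i j" unfolding re_def using enc_props(2)[OF mdsR' le1] ij by simp
      also have "\<dots> = mk U $$ (i,j)" using ij jn by (simp add: mk_def)
      also have "\<dots> = mk U' $$ (i,j)" using eq by simp
      also have "\<dots> = re U' i j" using ij jn by (simp add: mk_def)
      also have "\<dots> = U' (i,j)" unfolding re_def using enc_props(2)[OF mdsR' le1] ij by simp
      finally show "U p = U' p" using ij by simp
    qed
  qed
  have cKS: "card K \<le> card S"
  proof -
    have "card K = card (mk ` K)" using card_image[OF inj_on_subset[OF mkinj]] unfolding K_def by auto
    also have "\<dots> \<le> card S" using mkS finS unfolding S_def by (intro card_mono) auto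
    finally show ?thesis .
  qed
  have cVBK: "card V \<le> card B * card K"
  proof (rule fiber_count[OF finV _ finB finK])
    show "psi ` V \<subseteq> B" unfolding psi_def B_def by auto
    fix x0 assume x0: "x0 \<in> V"
    define h where "h x = restrict (\<lambda>p. x p - x0 p) box" for x
    have hV: "h x \<in> V" for x unfolding h_def V_def by simp
    have reh: "re (h x) i j = re x i j - re x0 i j" if "i < r" "j < N" for x i j
    proof -
      have "re (h x) i = enc Crow N k0 (\<lambda>j. x (i,j) - x0 (i,j))" unfolding re_def
        by (rule enc_cong) (use that in \<open>simp add: h_def box_def\<close>)
      thus ?thesis using enc_diff[OF mdsR' le1 that(2)] unfolding re_def by simp
    qed
    have cvh: "cv (h x) l qq = cv x l qq - cv x0 l qq" if "l < m'" "qq < r + E" for x l qq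
    proof -
      have "cv (h x) l = enc Ccol (r+E) r (\<lambda>i. re x i (n+l) - re x0 i (n+l))" unfolding cv_def
        by (rule enc_cong) (use that in \<open>simp add: reh N_def\<close>)
      thus ?thesis using enc_diff[OF mdsC le2 that(2)] unfolding cv_def by simp
    qed
    show "\<exists>h. inj_on h {x\<in>V. psi x = psi x0} \<and> h ` {x\<in>V. psi x = psi x0} \<subseteq> K"
    proof (intro exI conjI)
      show "inj_on h {x\<in>V. psi x = psi x0}"
      proof
        fix x x' assume x: "x \<in> {x\<in>V. psi x = psi x0}" and x': "x' \<in> {x\<in>V. psi x = psi x0}"
          and eq: "h x = h x'"
        show "x = x'"
        proof (rule extensionalityI)
          show "x \<in> extensional box" "x' \<in> extensional box" using x x' unfolding V_def by (auto simp: PiE_iff)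
          fix p assume p: "p \<in> box"
          have "h x p = h x' p" using eq by simp
          thus "x p = x' p" using p unfolding h_def by simp
        qed
      qed
      show "h ` {x\<in>V. psi x = psi x0} \<subseteq> K"
      proof
        fix y assume "y \<in> h ` {x\<in>V. psi x = psi x0}"
        then obtain x where x: "x \<in> V" "psi x = psi x0" "y = h x" by auto
        have "psi (h x) = restrict (\<lambda>_. 0) st"
        proof
          fix p
          show "psi (h x) p = restrict (\<lambda>_. 0) st p"
          proof (cases "p \<in> st")
            case False thus ?thesis unfolding psi_def by simp
          next
            case True
            then obtain i l where il: "p = (i, c0 + l)" "l < m'" "r - e l \<le> i" "i < r" using stI by blast
            have mem: "(i, c0 + l) \<in> st" using True il by simp
            have qq: "r + (i - (r - e l)) < r + E" using il eE[OF il(2)] er[OF il(2)] by simp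
            have "cv x l (r + (i - (r - e l))) = cv x0 l (r + (i - (r - e l)))"
              using x(2) psi_at[OF mem, of x] psi_at[OF mem, of x0] by metis
            thus ?thesis using psi_at[OF mem, of "h x"] cvh[OF il(2) qq, of x] True il(1) by simp
          qed
        qed
        thus "y \<in> K" unfolding K_def using hV x(3) by simp
      qed
    qed
  qed
  have qpos: "0 < q" unfolding q_def by (simp add: card_gt_0_iff)
  have cs: "card st \<le> card box" using card_mono[OF finbox stbox] .
  have "q ^ card st * q ^ (card box - card st) = q ^ card box" using cs by (simp add: power_add[symmetric])
  hence "q ^ card st * q ^ (card box - card st) \<le> q ^ card st * card K" using cVBK cV cB by simp
  hence "q ^ (card box - card st) \<le> card K" using qpos by simp
  thus ?thesis using cKS unfolding q_def box_def st_def S_def k0_def by simp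
qed



theorem mainTheorem3:
  fixes Crow Ccol :: "'a::{field,finite} list set"
    and n r m m' w :: nat and e :: "nat \<Rightarrow> nat"
  assumes card_field: "card (UNIV :: 'a set) = 2 ^ w"
    and "1 \<le> m" "m < n" "1 \<le> m'" "m' \<le> n - m"
    and "0 < e 0" "\<forall>l1 l2. l1 \<le> l2 \<and> l2 < m' \<longrightarrow> e l1 \<le> e l2" "e (m' - 1) \<le> r"
    and "n + m' \<le> 2 ^ w" "r + e (m' - 1) \<le> 2 ^ w"
    and "mds_code (n + m') (n - m) Crow"
    and "mds_code (r + e (m' - 1)) r Ccol"
  shows
    "bij_betw (\<lambda>X. restrict (\<lambda>p. X $$ p) (data_pos n r m m' e))
        (stair_code Crow Ccol n r m' e) (data_pos n r m m' e \<rightarrow>\<^sub>E UNIV)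
     \<and>
     (\<forall>F L. F \<subseteq> {0..<n} \<and> card F \<le> m \<and>
        (\<forall>j<n. j \<notin> F \<longrightarrow> L j \<subseteq> {0..<r}) \<and>
        card {j. j < n \<and> j \<notin> F \<and> L j \<noteq> {}} \<le> m' \<and>
        (let J = {j. j < n \<and> j \<notin> F \<and> L j \<noteq> {}};
             t = card J;
             fs = sort (map (\<lambda>j. card (L j)) (sorted_list_of_set J))
         in \<forall>i<t. fs ! (t - 1 - i) \<le> e (m' - 1 - i))
      \<longrightarrow> (\<forall>X\<in>stair_code Crow Ccol n r m' e. \<forall>Y\<in>stair_code Crow Ccol n r m' e.
            (\<forall>j<n. j \<notin> F \<longrightarrow> (\<forall>i<r. i \<notin> L j \<longrightarrow> X $$ (i, j) = Y $$ (i, j)))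
            \<longrightarrow> X = Y))"
proof -
  note a = assms
  define E where "E = e (m' - 1)"
  have mdsR: "mds_code (n + m') (n - m) Crow" using a by simp
  have mdsC: "mds_code (r + E) r Ccol" using a unfolding E_def by simp
  have mn: "m < n" using a by simp
  have mm: "m' \<le> n - m" using a by simp
  have eE: "e l \<le> E" if "l < m'" for l using a(7) that unfolding E_def by auto
  have er: "e l \<le> r" if "l < m'" for l using eE[OF that] a(8) unfolding E_def by simp
  define S where "S = stair_code Crow Ccol n r m' e"
  define dp where "dp = data_pos n r m m' e"
  define st where "st = stair_pos n r m m' e"
  define dmap where "dmap X = restrict (\<lambda>p. X $$ p) dp" for X :: "'a mat"
  have partb: "\<forall>F L. F \<subseteq> {0..<n} \<and> card F \<le> m \<and>
        (\<forall>j<n. j \<notin> F \<longrightarrow> L j \<subseteq> {0..<r}) \<and>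
        card {j. j < n \<and> j \<notin> F \<and> L j \<noteq> {}} \<le> m' \<and>
        (let J = {j. j < n \<and> j \<notin> F \<and> L j \<noteq> {}};
             t = card J;
             fs = sort (map (\<lambda>j. card (L j)) (sorted_list_of_set J))
         in \<forall>i<t. fs ! (t - 1 - i) \<le> e (m' - 1 - i))
      \<longrightarrow> (\<forall>X\<in>S. \<forall>Y\<in>S.
            (\<forall>j<n. j \<notin> F \<longrightarrow> (\<forall>i<r. i \<notin> L j \<longrightarrow> X $$ (i, j) = Y $$ (i, j)))
            \<longrightarrow> X = Y)"
  proof (intro allI impI ballI)
    fix F L X Y
    assume h: "F \<subseteq> {0..<n} \<and> card F \<le> m \<and>
        (\<forall>j<n. j \<notin> F \<longrightarrow> L j \<subseteq> {0..<r}) \<and>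
        card {j. j < n \<and> j \<notin> F \<and> L j \<noteq> {}} \<le> m' \<and>
        (let J = {j. j < n \<and> j \<notin> F \<and> L j \<noteq> {}};
             t = card J;
             fs = sort (map (\<lambda>j. card (L j)) (sorted_list_of_set J))
         in \<forall>i<t. fs ! (t - 1 - i) \<le> e (m' - 1 - i))"
      and X: "X \<in> S" and Y: "Y \<in> S"
      and ag: "\<forall>j<n. j \<notin> F \<longrightarrow> (\<forall>i<r. i \<notin> L j \<longrightarrow> X $$ (i, j) = Y $$ (i, j))"
    define J where "J = {j. j < n \<and> j \<notin> F \<and> L j \<noteq> {}}"
    have finJ: "finite J" unfolding J_def by simp
    have tm: "card J \<le> m'" using h unfolding J_def by simp
    have cond: "\<forall>i<card J. sort (map (\<lambda>j. card (L j)) (sorted_list_of_set J)) ! (card J - 1 - i) \<le> e (m' - 1 - i)"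
      using h unfolding J_def Let_def by simp
    have H: "card {j. j<n \<and> j\<notin>F \<and> L j \<noteq> {} \<and> k < card (L j)} \<le> card {l. l<m' \<and> k < e l}" for k
    proof -
      have "{j. j<n \<and> j\<notin>F \<and> L j \<noteq> {} \<and> k < card (L j)} = {j\<in>J. k < card (L j)}"
        unfolding J_def by auto
      thus ?thesis using fs_to_H[OF finJ tm cond, of k] by simp
    qed
    show "X = Y"
      by (rule decode[OF mdsR mdsC eE _ _ _ _ mn _ H ag])
         (use X Y h in \<open>auto simp: S_def\<close>)
  qed
  have inj: "inj_on dmap S"
  proof
    fix X Y assume X: "X \<in> S" and Y: "Y \<in> S" and eq: "dmap X = dmap Y"
    define F where "F = {n - m..<n}"
    define L where "L j = {i. i < r \<and> (i, j) \<in> st}" for j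
    have Fsub: "F \<subseteq> {0..<n}" unfolding F_def by auto
    have Fc: "card F \<le> m" unfolding F_def using mn by simp
    have Lsub: "\<And>j. j < n \<Longrightarrow> j \<notin> F \<Longrightarrow> L j \<subseteq> {0..<r}" unfolding L_def by auto
    have ag: "\<forall>j<n. j \<notin> F \<longrightarrow> (\<forall>i<r. i \<notin> L j \<longrightarrow> X $$ (i, j) = Y $$ (i, j))"
    proof (intro allI impI)
      fix j i assume j: "j < n" "j \<notin> F" and i: "i < r" "i \<notin> L j"
      have "(i,j) \<in> dp" using j i unfolding dp_def data_pos_def F_def L_def st_def by auto
      hence "dmap X (i,j) = X $$ (i,j)" "dmap Y (i,j) = Y $$ (i,j)" unfolding dmap_def by auto
      thus "X $$ (i, j) = Y $$ (i, j)" using eq by simp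
    qed
    have H: "card {j. j<n \<and> j\<notin>F \<and> L j \<noteq> {} \<and> k < card (L j)} \<le> card {l. l<m' \<and> k < e l}" for k
    proof -
      have "{j. j<n \<and> j\<notin>F \<and> L j \<noteq> {} \<and> k < card (L j)} \<subseteq> (\<lambda>l. n - m - m' + l) ` {l. l<m' \<and> k < e l}"
      proof
        fix j assume "j \<in> {j. j<n \<and> j\<notin>F \<and> L j \<noteq> {} \<and> k < card (L j)}"
        hence jL: "L j \<noteq> {}" and kc: "k < card (L j)" by auto
        then obtain i0 where "i0 \<in> L j" by auto
        then obtain i l where il: "(i0, j) = (i, n - m - m' + l)" "l < m'" unfolding L_def st_def stair_iff by blast
        have jl: "j = n - m - m' + l" using il by simp
        have "L j \<subseteq> {r - e l..<r}"
        proof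
          fix i' assume "i' \<in> L j"
          then obtain i2 l2 where "(i', j) = (i2, n - m - m' + l2)" "l2 < m'" "r - e l2 \<le> i2" "i2 < r"
            unfolding L_def st_def stair_iff by blast
          moreover hence "l2 = l" using jl by simp
          ultimately show "i' \<in> {r - e l..<r}" by simp
        qed
        hence "card (L j) \<le> e l" using card_mono[of "{r - e l..<r}" "L j"] by simp
        thus "j \<in> (\<lambda>l. n - m - m' + l) ` {l. l<m' \<and> k < e l}" using kc il(2) jl by auto
      qed
      hence "card {j. j<n \<and> j\<notin>F \<and> L j \<noteq> {} \<and> k < card (L j)} \<le> card ((\<lambda>l. n - m - m' + l) ` {l. l<m' \<and> k < e l})"
        by (rule card_mono[rotated]) simp
      also have "\<dots> \<le> card {l. l<m' \<and> k < e l}" by (rule card_image_le) simp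
      finally show ?thesis .
    qed
    show "X = Y"
      by (rule decode[OF mdsR mdsC eE _ _ Fsub Fc mn Lsub H ag]) (use X Y in \<open>auto simp: S_def\<close>)
  qed
  define box where "box = {0..<r} \<times> {0..<n-m}"
  have stbox: "st \<subseteq> box" unfolding st_def box_def stair_pos_def using mm by auto
  have finbox: "finite box" unfolding box_def by simp
  have finst: "finite st" using stbox finbox finite_subset by blast
  have dpeq: "dp = box - st" unfolding dp_def data_pos_def box_def st_def by auto
  have cdp: "card dp = card box - card st" unfolding dpeq using card_Diff_subset[OF finst stbox] .
  define T where "T = dp \<rightarrow>\<^sub>E (UNIV :: 'a set)"
  have findp: "finite dp" unfolding dpeq using finbox by simp
  have finT: "finite T" unfolding T_def using findp by (simp add: finite_PiE)
  have cT: "card T = card (UNIV :: 'a set) ^ card dp" unfolding T_def by (rule card_funcsetE[OF findp])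
  have img: "dmap ` S \<subseteq> T" unfolding dmap_def T_def by auto
  have finS: "finite S" using finite_imageD[OF finite_subset[OF img finT] inj] .
  have cS: "card (UNIV :: 'a set) ^ (card box - card st) \<le> card S"
    using surj_count[OF mdsR mdsC eE er mm] finS unfolding S_def box_def st_def by simp
  have "dmap ` S = T"
  proof (rule card_seteq[OF finT img])
    show "card T \<le> card (dmap ` S)" using cT cdp cS card_image[OF inj] by simp
  qed
  hence bij: "bij_betw dmap S T" using inj by (simp add: bij_betw_def)
  show ?thesis using bij partb unfolding dmap_def S_def T_def dp_def by blast
qed


end
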